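(* Let $\gamma,\sigma:[a,b]\to V$ be continuous paths of bounded variation and let $\phi:\mathbb{N}\cup\{0\}\to\mathbb{R}$ be such that $\sum_kC^k|\phi(k)|(k!)^{-2}<\infty$ for every $C>0$. Then the truncated kernel $K_\phi^{(N)}(s,t)$ converges to $K_\phi^{\gamma,\sigma}(s,t)$ as $N\to\infty$, and \[ \left|K_\phi^{\gamma,\sigma}(s,t)-K_\phi^{(N)}(s,t)\right|\le\sum_{k=N+1}^\infty|\phi(k)|\,\frac{(L_s(\gamma)L_t(\sigma))^k}{(k!)^2}. \]
   Context: $V$ is a finite-dimensional real inner product space, $\langle\cdot,\cdot\rangle_k$ the induced Hilbert–Schmidt inner product on $V^{\otimes k}$. Signature: $S(\gamma)^0=1$, $S(\gamma)^k_{s,t}=\int_{s<u_1<\dots<u_k<t}d\gamma_{u_1}\otimes\cdots\otimes d\gamma_{u_k}$. $K_\phi^{\gamma,\sigma}(s,t)=\sum_{k\ge0}\phi(k)\langle S(\gamma)^k_{a,s},S(\sigma)^k_{a,t}\rangle_k$ and $K_\phi^{(N)}(s,t)=\sum_{k=0}^N\phi(k)\langle S(\gamma)^k_{a,s},S(\sigma)^k_{a,t}\rangle_k$. $L_s(\gamma)$ is the length (1-variation) of $\gamma|_{[a,s]}$. *)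

theory Defs
  imports "HOL-Analysis.Analysis"
begin

definition interval_partition :: "real \<Rightarrow> real \<Rightarrow> real list \<Rightarrow> bool" where
  "interval_partition a b xs \<longleftrightarrow> xs \<noteq> [] \<and> hd xs = a \<and> last xs = b \<and> sorted xs"

definition variation_sum :: "(real \<Rightarrow> 'v::real_normed_vector) \<Rightarrow> real list \<Rightarrow> real" where
  "variation_sum \<gamma> xs = (\<Sum>i<length xs - 1. norm (\<gamma> (xs ! Suc i) - \<gamma> (xs ! i)))"

definition bounded_variation_on :: "(real \<Rightarrow> 'v::real_normed_vector) \<Rightarrow> real \<Rightarrow> real \<Rightarrow> bool" where
  "bounded_variation_on \<gamma> a b \<longleftrightarrow>
     bdd_above {variation_sum \<gamma> xs | xs. interval_partition a b xs}"

definition path_len :: "(real \<Rightarrow> 'v::real_normed_vector) \<Rightarrow> real \<Rightarrow> real \<Rightarrow> real" where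
  "path_len \<gamma> a s = Sup {variation_sum \<gamma> xs | xs. interval_partition a s xs}"

definition tagged_interval_partition :: "real \<Rightarrow> real \<Rightarrow> real list \<Rightarrow> real list \<Rightarrow> bool" where
  "tagged_interval_partition a b xs ts \<longleftrightarrow> interval_partition a b xs \<and>
     length ts = length xs - 1 \<and>
     (\<forall>i < length ts. xs ! i \<le> ts ! i \<and> ts ! i \<le> xs ! Suc i)"

definition mesh_less :: "real list \<Rightarrow> real \<Rightarrow> bool" where
  "mesh_less xs \<delta> \<longleftrightarrow> (\<forall>i < length xs - 1. xs ! Suc i - xs ! i < \<delta>)"

definition RS_sum :: "(real \<Rightarrow> real) \<Rightarrow> (real \<Rightarrow> real) \<Rightarrow> real list \<Rightarrow> real list \<Rightarrow> real" where
  "RS_sum f g xs ts = (\<Sum>i<length xs - 1. f (ts ! i) * (g (xs ! Suc i) - g (xs ! i)))"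

definition has_RS_integral :: "(real \<Rightarrow> real) \<Rightarrow> (real \<Rightarrow> real) \<Rightarrow> real \<Rightarrow> real \<Rightarrow> real \<Rightarrow> bool" where
  "has_RS_integral f g a b I \<longleftrightarrow>
     (\<forall>\<epsilon>>0. \<exists>\<delta>>0. \<forall>xs ts. tagged_interval_partition a b xs ts \<and> mesh_less xs \<delta> \<longrightarrow>
         \<bar>RS_sum f g xs ts - I\<bar> < \<epsilon>)"

definition RS_integral :: "(real \<Rightarrow> real) \<Rightarrow> (real \<Rightarrow> real) \<Rightarrow> real \<Rightarrow> real \<Rightarrow> real" where
  "RS_integral f g a b = (THE I. has_RS_integral f g a b I)"

text \<open>Tensors in V^{\<otimes>k} are represented by their coordinates w.r.t. the orthonormal basis
  {e_{i_1} \<otimes> ... \<otimes> e_{i_k}}, i.e. as functions on words (of length k) over \<open>Basis\<close>.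
  \<open>iter_int \<gamma> a t ws\<close>, with \<open>ws\<close> the REVERSED word, is the iterated integral
  \<open>\<integral>_{a<u_1<...<u_k<t} d\<gamma>^{i_1}_{u_1} ... d\<gamma>^{i_k}_{u_k}\<close>, computed recursively
  with the outermost (last) letter first.\<close>
fun iter_int :: "(real \<Rightarrow> 'v::euclidean_space) \<Rightarrow> real \<Rightarrow> real \<Rightarrow> 'v list \<Rightarrow> real" where
  "iter_int \<gamma> a t [] = 1"
| "iter_int \<gamma> a t (e # ws) = RS_integral (\<lambda>u. iter_int \<gamma> a u ws) (\<lambda>u. \<gamma> u \<bullet> e) a t"

definition signature_coord :: "(real \<Rightarrow> 'v::euclidean_space) \<Rightarrow> real \<Rightarrow> real \<Rightarrow> 'v list \<Rightarrow> real" where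
  "signature_coord \<gamma> a t w = iter_int \<gamma> a t (rev w)"

definition words :: "nat \<Rightarrow> 'v::euclidean_space list set" where
  "words k = {w. length w = k \<and> set w \<subseteq> Basis}"

definition sig_inner :: "nat \<Rightarrow> (real \<Rightarrow> 'v::euclidean_space) \<Rightarrow> (real \<Rightarrow> 'v) \<Rightarrow> real \<Rightarrow> real \<Rightarrow> real \<Rightarrow> real" where
  "sig_inner k \<gamma> \<sigma> a s t = (\<Sum>w\<in>words k. signature_coord \<gamma> a s w * signature_coord \<sigma> a t w)"

definition sig_kernel :: "(nat \<Rightarrow> real) \<Rightarrow> (real \<Rightarrow> 'v::euclidean_space) \<Rightarrow> (real \<Rightarrow> 'v) \<Rightarrow> real \<Rightarrow> real \<Rightarrow> real \<Rightarrow> real" where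
  "sig_kernel \<phi> \<gamma> \<sigma> a s t = (\<Sum>k. \<phi> k * sig_inner k \<gamma> \<sigma> a s t)"

definition sig_kernel_trunc :: "nat \<Rightarrow> (nat \<Rightarrow> real) \<Rightarrow> (real \<Rightarrow> 'v::euclidean_space) \<Rightarrow> (real \<Rightarrow> 'v) \<Rightarrow> real \<Rightarrow> real \<Rightarrow> real \<Rightarrow> real" where
  "sig_kernel_trunc N \<phi> \<gamma> \<sigma> a s t = (\<Sum>k\<le>N. \<phi> k * sig_inner k \<gamma> \<sigma> a s t)"

end

theory Submission
  imports Defs
begin


lemma ip_nth_mono:
  assumes "interval_partition a b xs" "i \<le> j" "j < length xs"
  shows "xs ! i \<le> xs ! j"
  using assms unfolding interval_partition_def by (simp add: sorted_nth_mono)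

lemma ip_nth_bounds:
  assumes "interval_partition a b xs" "i < length xs"
  shows "a \<le> xs ! i \<and> xs ! i \<le> b"
proof -
  have ne: "xs \<noteq> []" and h: "hd xs = a" and l: "last xs = b"
    using assms(1) unfolding interval_partition_def by auto
  have "xs ! 0 \<le> xs ! i" by (rule ip_nth_mono[OF assms(1)]) (use assms in auto)
  moreover have "xs ! i \<le> xs ! (length xs - 1)" by (rule ip_nth_mono[OF assms(1)]) (use assms in auto)
  ultimately show ?thesis using ne h l by (simp add: hd_conv_nth last_conv_nth)
qed

lemma ip_le: "interval_partition a b xs \<Longrightarrow> a \<le> b"
  using ip_nth_bounds[of a b xs 0] unfolding interval_partition_def by auto

lemma ip_telescope:
  assumes "interval_partition a b xs"
  shows "(\<Sum>i<length xs - 1. g (xs ! Suc i) - g (xs ! i)) = g b - (g a :: real)"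
proof -
  have ne: "xs \<noteq> []" and h: "hd xs = a" and l: "last xs = b"
    using assms(1) unfolding interval_partition_def by auto
  have "(\<Sum>i<length xs - 1. g (xs ! Suc i) - g (xs ! i)) = g (xs ! (length xs - 1)) - g (xs ! 0)"
    by (rule sum_lessThan_telescope[where f = "\<lambda>i. g (xs ! i)"])
  then show ?thesis using ne h l by (simp add: hd_conv_nth last_conv_nth)
qed

lemma tagged_tag_bounds:
  assumes "tagged_interval_partition a b xs ts" "i < length ts"
  shows "a \<le> ts ! i \<and> ts ! i \<le> b"
proof -
  have ip: "interval_partition a b xs" and len: "length ts = length xs - 1"
    and tg: "xs ! i \<le> ts ! i \<and> ts ! i \<le> xs ! Suc i"
    using assms unfolding tagged_interval_partition_def by auto
  have "i < length xs" "Suc i < length xs" using len assms(2) by auto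
  then show ?thesis using ip_nth_bounds[OF ip, of i] ip_nth_bounds[OF ip, of "Suc i"] tg
    by (meson order_trans)
qed

lemma tagged_tag_mono:
  assumes "tagged_interval_partition a b xs ts" "i \<le> j" "j < length ts"
  shows "ts ! i \<le> ts ! j"
proof (cases "i = j")
  case False
  have ip: "interval_partition a b xs" and len: "length ts = length xs - 1"
    and tg: "\<And>i. i < length ts \<Longrightarrow> xs ! i \<le> ts ! i \<and> ts ! i \<le> xs ! Suc i"
    using assms unfolding tagged_interval_partition_def by auto
  have "ts ! i \<le> xs ! Suc i" using tg[of i] assms by auto
  also have "\<dots> \<le> xs ! j" using ip_nth_mono[OF ip, of "Suc i" j] False assms len by auto
  also have "\<dots> \<le> ts ! j" using tg[of j] assms by auto
  finally show ?thesis .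
qed simp

definition upart :: "real \<Rightarrow> real \<Rightarrow> nat \<Rightarrow> real list" where
  "upart a b n = map (\<lambda>i. a + (b - a) * real i / real n) [0..<Suc n]"
definition utags :: "real \<Rightarrow> real \<Rightarrow> nat \<Rightarrow> real list" where
  "utags a b n = map (\<lambda>i. a + (b - a) * real i / real n) [0..<n]"

lemma upart_ip:
  assumes "a \<le> b" "n > 0"
  shows "interval_partition a b (upart a b n)"
proof -
  have "sorted (upart a b n)"
    unfolding upart_def sorted_iff_nth_mono
    using assms by (auto simp del: upt_Suc intro!: divide_right_mono mult_left_mono)
  moreover have "last (upart a b n) = b" unfolding upart_def using assms by (simp add: last_map)
  moreover have "hd (upart a b n) = a" unfolding upart_def by (simp add: hd_map upt_conv_Cons del: upt_Suc)
  ultimately show ?thesis unfolding interval_partition_def upart_def by simp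
qed

lemma upart_tagged:
  assumes "a \<le> b" "n > 0"
  shows "tagged_interval_partition a b (upart a b n) (utags a b n)"
proof -
  have "utags a b n ! i \<le> upart a b n ! Suc i" if "i < n" for i
    using that assms unfolding upart_def utags_def
    by (auto simp del: upt_Suc intro!: divide_right_mono mult_left_mono)
  then show ?thesis using upart_ip[OF assms] unfolding tagged_interval_partition_def
    by (auto simp: upart_def utags_def simp del: upt_Suc)
qed

lemma upart_mesh:
  assumes "a \<le> b" "n > 0" "(b - a) / n < \<delta>"
  shows "mesh_less (upart a b n) \<delta>"
proof -
  have "upart a b n ! Suc i - upart a b n ! i = (b - a) / n" if "i < n" for i
    using that assms unfolding upart_def by (simp del: upt_Suc add: field_simps nth_append)
  then show ?thesis using assms unfolding mesh_less_def by (simp add: upart_def)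
qed

lemma exists_fine_n:
  assumes "\<delta> > 0"
  shows "\<exists>n::nat. n > 0 \<and> (b - a) / real n < \<delta>"
proof -
  obtain n :: nat where n: "(b - a) / \<delta> < n" using reals_Archimedean2 by blast
  have "b - a < \<delta> * n" using n assms by (simp add: divide_less_eq mult.commute)
  also have "\<dots> \<le> \<delta> * real (Suc n)" using assms by simp
  finally have "(b - a) / real (Suc n) < \<delta>" by (simp add: divide_less_eq mult.commute)
  then show ?thesis by (intro exI[of _ "Suc n"]) simp
qed

lemma sum_lessThan_add_split:
  "(\<Sum>i<n1 + n2. F i) = (\<Sum>i<n1. F i) + (\<Sum>j<n2. F (n1 + j :: nat)) + (0::real)"
  by (induction n2) (simp_all add: add.assoc)

lemma RS_unique:
  assumes "a \<le> b" "has_RS_integral f g a b I" "has_RS_integral f g a b J"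
  shows "I = J"
proof (rule ccontr)
  assume ne: "I \<noteq> J"
  define e where "e = \<bar>I - J\<bar> / 2"
  have e: "e > 0" using ne by (simp add: e_def)
  obtain d1 where d1: "d1 > 0" "\<And>xs ts. tagged_interval_partition a b xs ts \<and> mesh_less xs d1 \<Longrightarrow>
         \<bar>RS_sum f g xs ts - I\<bar> < e"
    using assms(2) e unfolding has_RS_integral_def by meson
  obtain d2 where d2: "d2 > 0" "\<And>xs ts. tagged_interval_partition a b xs ts \<and> mesh_less xs d2 \<Longrightarrow>
         \<bar>RS_sum f g xs ts - J\<bar> < e"
    using assms(3) e unfolding has_RS_integral_def by meson
  obtain n :: nat where n: "n > 0" "(b - a) / n < min d1 d2"
    using exists_fine_n[of "min d1 d2" b a] d1 d2 by auto
  have t: "tagged_interval_partition a b (upart a b n) (utags a b n)"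
    using upart_tagged[OF assms(1) n(1)] .
  have "mesh_less (upart a b n) d1" "mesh_less (upart a b n) d2"
    using upart_mesh[OF assms(1) n(1)] n(2) by auto
  then have "\<bar>RS_sum f g (upart a b n) (utags a b n) - I\<bar> < e"
    "\<bar>RS_sum f g (upart a b n) (utags a b n) - J\<bar> < e"
    using d1(2) d2(2) t by auto
  then show False unfolding e_def by (simp add: abs_if split: if_splits)
qed

lemma RS_integral_eq:
  assumes "a \<le> b" "has_RS_integral f g a b I"
  shows "RS_integral f g a b = I"
  unfolding RS_integral_def
proof (rule the_equality)
  show "has_RS_integral f g a b I" by (rule assms(2))
  fix J assume "has_RS_integral f g a b J"
  then show "J = I" using RS_unique[OF assms(1) assms(2)] by simp
qed

lemma RS_sum_const_bound:
  assumes "tagged_interval_partition a b xs ts" "0 \<le> \<eta>"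
    "\<forall>i<length ts. \<bar>f (ts ! i) - c\<bar> \<le> \<eta>" "variation_sum g xs \<le> B"
  shows "\<bar>RS_sum f g xs ts - c * (g b - g a)\<bar> \<le> \<eta> * B"
proof -
  have ip: "interval_partition a b xs" and len: "length ts = length xs - 1"
    using assms(1) unfolding tagged_interval_partition_def by auto
  have "c * (g b - g a) = (\<Sum>i<length xs - 1. c * (g (xs ! Suc i) - g (xs ! i)))"
    using ip_telescope[OF ip, of g] by (simp add: sum_distrib_left[symmetric])
  then have "RS_sum f g xs ts - c * (g b - g a)
      = (\<Sum>i<length xs - 1. (f (ts ! i) - c) * (g (xs ! Suc i) - g (xs ! i)))"
    unfolding RS_sum_def left_diff_distrib sum_subtractf len by simp
  also have "\<bar>\<dots>\<bar> \<le> (\<Sum>i<length xs - 1. \<bar>(f (ts ! i) - c) * (g (xs ! Suc i) - g (xs ! i))\<bar>)"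
    by (rule sum_abs)
  also have "\<dots> \<le> (\<Sum>i<length xs - 1. \<eta> * \<bar>g (xs ! Suc i) - g (xs ! i)\<bar>)"
  proof (rule sum_mono)
    fix i assume "i \<in> {..<length xs - 1}"
    then have "\<bar>f (ts ! i) - c\<bar> \<le> \<eta>" using assms(3) len by auto
    then show "\<bar>(f (ts ! i) - c) * (g (xs ! Suc i) - g (xs ! i))\<bar> \<le> \<eta> * \<bar>g (xs ! Suc i) - g (xs ! i)\<bar>"
      by (simp add: abs_mult mult_right_mono)
  qed
  also have "\<dots> = \<eta> * variation_sum g xs"
    unfolding variation_sum_def by (simp add: sum_distrib_left)
  also have "\<dots> \<le> \<eta> * B" using assms(2,4) by (simp add: mult_left_mono)
  finally show ?thesis .
qed

lemma RS_integral_const_bound: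
  assumes "a \<le> b" "has_RS_integral f g a b I" "0 \<le> \<eta>"
    "\<forall>x\<in>{a..b}. \<bar>f x - c\<bar> \<le> \<eta>"
    "\<forall>xs. interval_partition a b xs \<longrightarrow> variation_sum g xs \<le> B"
  shows "\<bar>I - c * (g b - g a)\<bar> \<le> \<eta> * B"
proof (rule field_le_epsilon)
  fix e :: real assume e: "e > 0"
  obtain d where d: "d > 0" "\<And>xs ts. tagged_interval_partition a b xs ts \<and> mesh_less xs d \<Longrightarrow>
         \<bar>RS_sum f g xs ts - I\<bar> < e"
    using assms(2) e unfolding has_RS_integral_def by meson
  obtain n :: nat where n: "n > 0" "(b - a) / n < d"
    using exists_fine_n[of d b a] d by auto
  have t: "tagged_interval_partition a b (upart a b n) (utags a b n)"
    using upart_tagged[OF assms(1) n(1)] .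
  have "mesh_less (upart a b n) d"
    using upart_mesh[OF assms(1) n(1)] n(2) by auto
  then have 1: "\<bar>RS_sum f g (upart a b n) (utags a b n) - I\<bar> < e" using d t by auto
  have "\<forall>i<length (utags a b n). \<bar>f (utags a b n ! i) - c\<bar> \<le> \<eta>"
    using tagged_tag_bounds[OF t] assms(4) by auto
  moreover have "variation_sum g (upart a b n) \<le> B"
    using assms(5) t unfolding tagged_interval_partition_def by auto
  ultimately have "\<bar>RS_sum f g (upart a b n) (utags a b n) - c * (g b - g a)\<bar> \<le> \<eta> * B"
    using RS_sum_const_bound[OF t assms(3)] by auto
  with 1 show "\<bar>I - c * (g b - g a)\<bar> \<le> \<eta> * B + e" by linarith
qed




lemma heaviside_sum:
  assumes t: "tagged_interval_partition a b xs ts" and m: "mesh_less xs \<delta>" and d: "\<delta> > 0"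
    and y: "a \<le> y" "y \<le> b"
  shows "\<exists>p \<le> length ts. \<bar>xs ! p - y\<bar> < \<delta> \<and>
     (\<Sum>i<length ts. if y \<le> ts ! i then g (xs ! Suc i) - g (xs ! i) else 0) = g b - (g (xs ! p) :: real)"
proof -
  have ip: "interval_partition a b xs" and len: "length ts = length xs - 1"
    and tg: "\<And>i. i < length ts \<Longrightarrow> xs ! i \<le> ts ! i \<and> ts ! i \<le> xs ! Suc i"
    using t unfolding tagged_interval_partition_def by auto
  have ne: "xs \<noteq> []" and h: "hd xs = a" and l: "last xs = b"
    using ip unfolding interval_partition_def by auto
  have x0: "xs ! 0 = a" using ne h by (simp add: hd_conv_nth)
  define n where "n = length ts"
  have xn: "xs ! n = b" using ne l len by (simp add: last_conv_nth n_def)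
  have lenx: "length xs = Suc n" using len ne n_def by (cases xs) auto
  have ms: "\<And>i. i < n \<Longrightarrow> xs ! Suc i - xs ! i < \<delta>" using m len unfolding mesh_less_def n_def by auto
  define p where "p = (LEAST i. i = n \<or> y \<le> ts ! i)"
  have pn: "p \<le> n" unfolding p_def by (rule Least_le) simp
  have below: "ts ! i < y" if "i < p" for i
    using not_less_Least[OF that[unfolded p_def]] by auto
  have above: "y \<le> ts ! i" if "p \<le> i" "i < n" for i
  proof -
    have "p = n \<or> y \<le> ts ! p" unfolding p_def by (rule LeastI[of _ n]) simp
    then have "y \<le> ts ! p" using that by auto
    also have "\<dots> \<le> ts ! i" using tagged_tag_mono[OF t that(1)] that(2) n_def by auto
    finally show ?thesis .
  qed
  have "(\<Sum>i<n. if y \<le> ts ! i then g (xs ! Suc i) - g (xs ! i) else 0)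
      = (\<Sum>i<p. if y \<le> ts ! i then g (xs ! Suc i) - g (xs ! i) else 0)
        + (\<Sum>i=p..<n. if y \<le> ts ! i then g (xs ! Suc i) - g (xs ! i) else 0)"
    using pn unfolding lessThan_atLeast0 by (simp add: sum.atLeastLessThan_concat)
  also have "(\<Sum>i<p. if y \<le> ts ! i then g (xs ! Suc i) - g (xs ! i) else 0) = 0"
    by (intro sum.neutral) (auto dest!: below)
  also have "(\<Sum>i=p..<n. if y \<le> ts ! i then g (xs ! Suc i) - g (xs ! i) else 0)
       = (\<Sum>i=p..<n. g (xs ! Suc i) - g (xs ! i))"
    using above by (intro sum.cong) auto
  also have "\<dots> = g (xs ! n) - g (xs ! p)" by (rule sum_Suc_diff'[OF pn])
  finally have sumeq: "(\<Sum>i<n. if y \<le> ts ! i then g (xs ! Suc i) - g (xs ! i) else 0) = g b - g (xs ! p)"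
    using xn by simp
  have up: "xs ! p < y + \<delta>"
  proof (cases "p = 0")
    case True then show ?thesis using x0 y d by simp
  next
    case False
    then have "p - 1 < p" "p - 1 < n" using pn by auto
    then have "ts ! (p - 1) < y" "xs ! (p - 1) \<le> ts ! (p - 1)" "xs ! Suc (p - 1) - xs ! (p - 1) < \<delta>"
      using below tg[of "p - 1"] ms[of "p - 1"] n_def by auto
    then show ?thesis using False by simp
  qed
  have lo: "y - \<delta> < xs ! p"
  proof (cases "p = n")
    case True then show ?thesis using xn y d by simp
  next
    case False
    then have "p < n" using pn by simp
    then have "y \<le> ts ! p" "ts ! p \<le> xs ! Suc p" "xs ! Suc p - xs ! p < \<delta>"
      using above[of p] tg[of p] ms[of p] n_def by auto
    then show ?thesis by simp
  qed
  have "\<bar>xs ! p - y\<bar> < \<delta>" using up lo by (simp add: abs_less_iff)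
  with pn sumeq show ?thesis unfolding n_def by blast
qed

lemma RS_sum_diff_bound:
  assumes "tagged_interval_partition a b xs ts" "0 \<le> \<eta>"
    "\<forall>i<length ts. \<bar>f (ts ! i) - h (ts ! i)\<bar> \<le> \<eta>" "variation_sum g xs \<le> B"
  shows "\<bar>RS_sum f g xs ts - RS_sum h g xs ts\<bar> \<le> \<eta> * B"
proof -
  have len: "length ts = length xs - 1"
    using assms(1) unfolding tagged_interval_partition_def by auto
  have "RS_sum f g xs ts - RS_sum h g xs ts
      = (\<Sum>i<length xs - 1. (f (ts ! i) - h (ts ! i)) * (g (xs ! Suc i) - g (xs ! i)))"
    unfolding RS_sum_def left_diff_distrib sum_subtractf by simp
  also have "\<bar>\<dots>\<bar> \<le> (\<Sum>i<length xs - 1. \<bar>(f (ts ! i) - h (ts ! i)) * (g (xs ! Suc i) - g (xs ! i))\<bar>)"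
    by (rule sum_abs)
  also have "\<dots> \<le> (\<Sum>i<length xs - 1. \<eta> * \<bar>g (xs ! Suc i) - g (xs ! i)\<bar>)"
  proof (rule sum_mono)
    fix i assume "i \<in> {..<length xs - 1}"
    then have "\<bar>f (ts ! i) - h (ts ! i)\<bar> \<le> \<eta>" using assms(3) len by auto
    then show "\<bar>(f (ts ! i) - h (ts ! i)) * (g (xs ! Suc i) - g (xs ! i))\<bar> \<le> \<eta> * \<bar>g (xs ! Suc i) - g (xs ! i)\<bar>"
      by (simp add: abs_mult mult_right_mono)
  qed
  also have "\<dots> = \<eta> * variation_sum g xs"
    unfolding variation_sum_def by (simp add: sum_distrib_left)
  also have "\<dots> \<le> \<eta> * B" using assms(2,4) by (simp add: mult_left_mono)
  finally show ?thesis .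
qed

lemma step_approx:
  assumes "a \<le> b" "continuous_on {a..b} f" "\<epsilon> > 0"
  shows "\<exists>m c0 (d::nat\<Rightarrow>real) (y::nat\<Rightarrow>real). (\<forall>k<m. a \<le> y k \<and> y k \<le> b) \<and>
     (\<forall>u\<in>{a..b}. \<bar>f u - (c0 + (\<Sum>k<m. d k * (if y k \<le> u then 1 else 0)))\<bar> \<le> \<epsilon>)"
proof (cases "a = b")
  case True
  show ?thesis
    by (rule exI[of _ 0], rule exI[of _ "f a"], rule exI[of _ "\<lambda>_. 0"], rule exI[of _ "\<lambda>_. a"])
      (use True assms(3) in auto)
next
  case False
  then have ab: "a < b" using assms(1) by simp
  have "uniformly_continuous_on {a..b} f"
    by (rule compact_uniformly_continuous[OF assms(2) compact_Icc])
  then obtain \<delta> where \<delta>: "\<delta> > 0" "\<And>x x'. x \<in> {a..b} \<Longrightarrow> x' \<in> {a..b} \<Longrightarrow> dist x' x < \<delta> \<Longrightarrow> dist (f x') (f x) < \<epsilon>"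
    unfolding uniformly_continuous_on_def using assms(3) by metis
  obtain n :: nat where n: "n > 0" "(b - a) / n < \<delta>" using exists_fine_n[OF \<delta>(1)] by blast
  define h where "h = (b - a) / n"
  have h: "h > 0" using ab n by (simp add: h_def)
  have nh: "real n * h = b - a" using n by (simp add: h_def)
  define F where "F k = f (a + real k * h)" for k
  define d where "d k = F (Suc k) - F k" for k
  define y where "y k = a + real (Suc k) * h" for k
  have yb: "\<forall>k<n. a \<le> y k \<and> y k \<le> b"
  proof (intro allI impI)
    fix k assume "k < n"
    then have "real (Suc k) * h \<le> real n * h" using h by (intro mult_right_mono) auto
    then show "a \<le> y k \<and> y k \<le> b" using h nh unfolding y_def by simp
  qed
  have approx: "\<bar>f u - (f a + (\<Sum>k<n. d k * (if y k \<le> u then 1 else 0)))\<bar> \<le> \<epsilon>"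
    if u: "u \<in> {a..b}" for u
  proof -
    define z where "z = (u - a) / h"
    have z0: "0 \<le> z" using u h by (simp add: z_def)
    define j where "j = nat \<lfloor>z\<rfloor>"
    have jz: "real j \<le> z" "z < real j + 1" using z0 unfolding j_def by linarith+
    have zn: "z \<le> real n" using u h nh by (simp add: z_def divide_le_eq mult.commute)
    have jn: "j \<le> n" using jz zn by linarith
    have iff: "y k \<le> u \<longleftrightarrow> k < j" for k
    proof -
      have "y k \<le> u \<longleftrightarrow> real (Suc k) \<le> z"
        using h unfolding y_def z_def by (simp add: le_divide_eq algebra_simps)
      also have "\<dots> \<longleftrightarrow> Suc k \<le> j"
        using jz le_nat_floor[of "Suc k" z] unfolding j_def by (auto simp del: of_nat_Suc)
      finally show ?thesis using Suc_le_eq by blast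
    qed
    have "(\<Sum>k<n. d k * (if y k \<le> u then 1 else 0)) = (\<Sum>k<n. if k \<in> {..<j} then d k else 0)"
      by (rule sum.cong) (auto simp: iff)
    also have "\<dots> = (\<Sum>k\<in>{..<n} \<inter> {..<j}. d k)" by (simp add: sum.inter_restrict)
    also have "{..<n} \<inter> {..<j} = {..<j}" using jn by auto
    also have "(\<Sum>k<j. d k) = F j - F 0" unfolding d_def by (rule sum_lessThan_telescope)
    finally have eq: "f a + (\<Sum>k<n. d k * (if y k \<le> u then 1 else 0)) = f (a + real j * h)"
      unfolding F_def by simp
    have p1: "a + real j * h \<le> u" using jz h unfolding z_def by (simp add: le_divide_eq algebra_simps)
    have p2: "u < a + real j * h + h" using jz h unfolding z_def by (simp add: divide_less_eq algebra_simps)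
    have inab: "a + real j * h \<in> {a..b}" using p1 u h by auto
    have "dist u (a + real j * h) < \<delta>" using p1 p2 n(2) h_def by (simp add: dist_real_def)
    then have "dist (f u) (f (a + real j * h)) < \<epsilon>" using \<delta>(2)[OF inab u] by simp
    then show ?thesis using eq by (simp add: dist_real_def)
  qed
  show ?thesis
    by (rule exI[of _ n], rule exI[of _ "f a"], rule exI[of _ d], rule exI[of _ y]) (use yb approx in blast)
qed

lemma vbound_nonneg:
  assumes "a \<le> b" "\<forall>xs. interval_partition a b xs \<longrightarrow> variation_sum g xs \<le> B"
  shows "0 \<le> B"
proof -
  have "interval_partition a b [a, b]" using assms(1) unfolding interval_partition_def by simp
  then have "variation_sum g [a, b] \<le> B" using assms(2) by blast
  moreover have "variation_sum g [a, b] \<ge> 0" unfolding variation_sum_def by (simp add: sum_nonneg)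
  ultimately show ?thesis by linarith
qed

lemma RS_approx:
  fixes f g :: "real \<Rightarrow> real"
  assumes ab: "a \<le> b" and cf: "continuous_on {a..b} f" and cg: "continuous_on {a..b} g"
    and vb: "\<forall>xs. interval_partition a b xs \<longrightarrow> variation_sum g xs \<le> B" and e: "\<epsilon> > 0"
  shows "\<exists>\<delta>>0. \<exists>T. \<forall>xs ts. tagged_interval_partition a b xs ts \<and> mesh_less xs \<delta> \<longrightarrow>
            \<bar>RS_sum f g xs ts - T\<bar> < \<epsilon>"
proof -
  have B0: "0 \<le> B" by (rule vbound_nonneg[OF ab vb])
  define \<epsilon>1 where "\<epsilon>1 = \<epsilon> / (2 * (B + 1))"
  have e1: "\<epsilon>1 > 0" using e B0 by (simp add: \<epsilon>1_def)
  have e1B: "\<epsilon>1 * B < \<epsilon> / 2"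
  proof -
    have "\<epsilon>1 * B = (\<epsilon> / 2) * (B / (B + 1))" using B0 by (simp add: \<epsilon>1_def field_simps)
    also have "\<dots> < (\<epsilon> / 2) * 1" using e B0 by (intro mult_strict_left_mono) auto
    finally show ?thesis by simp
  qed
  obtain m :: nat and c0 :: real and d y :: "nat \<Rightarrow> real" where yb: "\<forall>k<m. a \<le> y k \<and> y k \<le> b"
    and app: "\<forall>u\<in>{a..b}. \<bar>f u - (c0 + (\<Sum>k<m. d k * (if y k \<le> u then 1 else (0::real))))\<bar> \<le> \<epsilon>1"
    using step_approx[OF ab cf e1] by blast
  define \<phi> where "\<phi> u = c0 + (\<Sum>k<m. d k * (if y k \<le> u then 1 else (0::real)))" for u
  define D where "D = (\<Sum>k<m. \<bar>d k\<bar>)"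
  have D0: "0 \<le> D" unfolding D_def by (simp add: sum_nonneg)
  define \<eta> where "\<eta> = \<epsilon> / (4 * (D + 1))"
  have eta: "\<eta> > 0" using e D0 by (simp add: \<eta>_def)
  have Deta: "D * \<eta> < \<epsilon> / 2"
  proof -
    have "D * \<eta> = (\<epsilon> / 4) * (D / (D + 1))" using D0 by (simp add: \<eta>_def field_simps)
    also have "\<dots> < (\<epsilon> / 4) * 1" using e D0 by (intro mult_strict_left_mono) auto
    finally show ?thesis using e by simp
  qed
  have "uniformly_continuous_on {a..b} g"
    by (rule compact_uniformly_continuous[OF cg compact_Icc])
  then obtain \<delta> where \<delta>: "\<delta> > 0" "\<And>x x'. x \<in> {a..b} \<Longrightarrow> x' \<in> {a..b} \<Longrightarrow> dist x' x < \<delta> \<Longrightarrow> dist (g x') (g x) < \<eta>"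
    unfolding uniformly_continuous_on_def using eta by metis
  define T where "T = c0 * (g b - g a) + (\<Sum>k<m. d k * (g b - g (y k)))"
  have main: "\<bar>RS_sum f g xs ts - T\<bar> < \<epsilon>"
    if t: "tagged_interval_partition a b xs ts" and ms: "mesh_less xs \<delta>" for xs ts
  proof -
    have ip: "interval_partition a b xs" and len: "length ts = length xs - 1"
      using t unfolding tagged_interval_partition_def by auto
    have lenx: "length xs = Suc (length ts)"
      using len ip unfolding interval_partition_def by (cases xs) auto
    define \<Delta> where "\<Delta> i = g (xs ! Suc i) - g (xs ! i)" for i
    define H where "H k = (\<Sum>i<length ts. if y k \<le> ts ! i then g (xs ! Suc i) - g (xs ! i) else 0)" for k
    have 1: "\<bar>RS_sum f g xs ts - RS_sum \<phi> g xs ts\<bar> \<le> \<epsilon>1 * B"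
    proof (rule RS_sum_diff_bound[OF t])
      show "0 \<le> \<epsilon>1" using e1 by simp
      show "\<forall>i<length ts. \<bar>f (ts ! i) - \<phi> (ts ! i)\<bar> \<le> \<epsilon>1"
        using app tagged_tag_bounds[OF t] unfolding \<phi>_def by auto
      show "variation_sum g xs \<le> B" using vb ip by blast
    qed
    have "RS_sum \<phi> g xs ts = (\<Sum>i<length ts. c0 * \<Delta> i + (\<Sum>k<m. d k * (if y k \<le> ts ! i then \<Delta> i else 0)))"
      unfolding RS_sum_def \<phi>_def \<Delta>_def len[symmetric]
      by (intro sum.cong refl) (auto simp: distrib_right sum_distrib_right intro!: sum.cong)
    also have "\<dots> = c0 * (\<Sum>i<length ts. \<Delta> i) + (\<Sum>k<m. d k * H k)"
      unfolding H_def \<Delta>_def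
      by (simp add: sum.distrib sum_distrib_left sum.swap[of _ "{..<m}"] if_distrib cong: if_cong)
    also have "(\<Sum>i<length ts. \<Delta> i) = g b - g a"
      using ip_telescope[OF ip, of g] unfolding \<Delta>_def len by simp
    finally have 2: "RS_sum \<phi> g xs ts = c0 * (g b - g a) + (\<Sum>k<m. d k * H k)" .
    have Hk: "\<bar>H k - (g b - g (y k))\<bar> < \<eta>" if k: "k < m" for k
    proof -
      obtain p where p: "p \<le> length ts" "\<bar>xs ! p - y k\<bar> < \<delta>" "H k = g b - g (xs ! p)"
        using heaviside_sum[OF t ms \<delta>(1), of "y k" g] yb k unfolding H_def by auto
      have "xs ! p \<in> {a..b}" using ip_nth_bounds[OF ip, of p] p(1) lenx by auto
      moreover have "y k \<in> {a..b}" using yb k by auto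
      ultimately have "dist (g (xs ! p)) (g (y k)) < \<eta>" using \<delta>(2) p(2) by (simp add: dist_real_def)
      then show ?thesis using p(3) by (simp add: dist_real_def abs_minus_commute)
    qed
    have "\<bar>(\<Sum>k<m. d k * H k) - (\<Sum>k<m. d k * (g b - g (y k)))\<bar>
        = \<bar>\<Sum>k<m. d k * (H k - (g b - g (y k)))\<bar>"
      by (simp add: sum_subtractf[symmetric] right_diff_distrib)
    also have "\<dots> \<le> (\<Sum>k<m. \<bar>d k * (H k - (g b - g (y k)))\<bar>)" by (rule sum_abs)
    also have "\<dots> \<le> (\<Sum>k<m. \<bar>d k\<bar> * \<eta>)"
      using Hk by (intro sum_mono) (simp add: abs_mult mult_left_mono less_imp_le)
    also have "\<dots> = D * \<eta>" unfolding D_def by (simp add: sum_distrib_right)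
    finally have 3: "\<bar>RS_sum \<phi> g xs ts - T\<bar> \<le> D * \<eta>" unfolding 2 T_def by simp
    show ?thesis using 1 3 e1B Deta by linarith
  qed
  show ?thesis using \<delta>(1) main by blast
qed

lemma RS_exists_from_approx:
  assumes ab: "a \<le> b"
    and A: "\<And>\<epsilon>. \<epsilon> > 0 \<Longrightarrow> \<exists>\<delta>>0. \<exists>T. \<forall>xs ts. tagged_interval_partition a b xs ts \<and> mesh_less xs \<delta> \<longrightarrow>
            \<bar>RS_sum f g xs ts - T\<bar> < \<epsilon>"
  shows "\<exists>I. has_RS_integral f g a b I"
proof -
  define s where "s n = RS_sum f g (upart a b (Suc n)) (utags a b (Suc n))" for n
  have tg: "tagged_interval_partition a b (upart a b (Suc n)) (utags a b (Suc n))" for n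
    using upart_tagged[OF ab] by simp
  have fine: "\<exists>N. \<forall>n\<ge>N. mesh_less (upart a b (Suc n)) \<delta>" if dpos: "\<delta> > 0" for \<delta>
  proof -
    obtain N :: nat where N: "N > 0" "(b - a) / N < \<delta>" using exists_fine_n[OF dpos] by blast
    have "mesh_less (upart a b (Suc n)) \<delta>" if "n \<ge> N" for n
    proof (rule upart_mesh[OF ab])
      have "(b - a) / real (Suc n) \<le> (b - a) / N"
        using ab N that by (intro divide_left_mono) auto
      then show "(b - a) / real (Suc n) < \<delta>" using N by linarith
    qed simp
    then show ?thesis by blast
  qed
  have "Cauchy s"
  proof (rule CauchyI)
    fix e :: real assume e: "e > 0"
    obtain \<delta> T where \<delta>: "\<delta> > 0" "\<forall>xs ts. tagged_interval_partition a b xs ts \<and> mesh_less xs \<delta> \<longrightarrow>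
            \<bar>RS_sum f g xs ts - T\<bar> < e / 2"
      using A[of "e / 2"] e by auto
    obtain N where N: "\<forall>n\<ge>N. mesh_less (upart a b (Suc n)) \<delta>" using fine[OF \<delta>(1)] by blast
    have "\<bar>s n - T\<bar> < e / 2" if "n \<ge> N" for n
      using \<delta>(2) N tg that unfolding s_def by blast
    then have "\<forall>m\<ge>N. \<forall>n\<ge>N. norm (s m - s n) < e"
    proof (intro allI impI)
      fix m n assume "m \<ge> N" "n \<ge> N"
      then have "\<bar>s m - T\<bar> < e / 2" "\<bar>s n - T\<bar> < e / 2" using \<open>\<And>n. n \<ge> N \<Longrightarrow> \<bar>s n - T\<bar> < e / 2\<close> by auto
      then show "norm (s m - s n) < e" by (simp add: abs_if split: if_splits)
    qed
    then show "\<exists>M. \<forall>m\<ge>M. \<forall>n\<ge>M. norm (s m - s n) < e" by blast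
  qed
  then obtain I where I: "s \<longlonglongrightarrow> I" using Cauchy_convergent_iff convergent_def by blast
  have "has_RS_integral f g a b I"
    unfolding has_RS_integral_def
  proof (intro allI impI)
    fix e :: real assume e: "e > 0"
    obtain \<delta> T where \<delta>: "\<delta> > 0" "\<forall>xs ts. tagged_interval_partition a b xs ts \<and> mesh_less xs \<delta> \<longrightarrow>
            \<bar>RS_sum f g xs ts - T\<bar> < e / 3"
      using A[of "e / 3"] e by auto
    obtain N where N: "\<forall>n\<ge>N. mesh_less (upart a b (Suc n)) \<delta>" using fine[OF \<delta>(1)] by blast
    have "\<forall>n\<ge>N. \<bar>s n - T\<bar> \<le> e / 3"
      using \<delta>(2) N tg unfolding s_def by (auto intro: less_imp_le)
    moreover have "(\<lambda>n. \<bar>s n - T\<bar>) \<longlonglongrightarrow> \<bar>I - T\<bar>" by (intro tendsto_intros I)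
    ultimately have IT: "\<bar>I - T\<bar> \<le> e / 3" using Lim_bounded by blast
    show "\<exists>d>0. \<forall>xs ts. tagged_interval_partition a b xs ts \<and> mesh_less xs d \<longrightarrow> \<bar>RS_sum f g xs ts - I\<bar> < e"
    proof (intro exI[of _ \<delta>] conjI allI impI)
      fix xs ts assume "tagged_interval_partition a b xs ts \<and> mesh_less xs \<delta>"
      then have "\<bar>RS_sum f g xs ts - T\<bar> < e / 3" using \<delta>(2) by blast
      then show "\<bar>RS_sum f g xs ts - I\<bar> < e" using IT e by linarith
    qed (rule \<delta>(1))
  qed
  then show ?thesis by blast
qed

lemma RS_exists:
  fixes f g :: "real \<Rightarrow> real"
  assumes "a \<le> b" "continuous_on {a..b} f" "continuous_on {a..b} g"
    "\<forall>xs. interval_partition a b xs \<longrightarrow> variation_sum g xs \<le> B"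
  shows "\<exists>I. has_RS_integral f g a b I"
  by (rule RS_exists_from_approx[OF assms(1) RS_approx[OF assms]])




lemma ip_set_bounds:
  assumes "interval_partition a b xs" "x \<in> set xs"
  shows "a \<le> x \<and> x \<le> b"
  using assms ip_nth_bounds by (metis in_set_conv_nth)

lemma tagged_concat:
  assumes t1: "tagged_interval_partition a u xs1 ts1" and t2: "tagged_interval_partition u v xs2 ts2"
  shows "tagged_interval_partition a v (butlast xs1 @ xs2) (ts1 @ ts2)"
    and "RS_sum f g (butlast xs1 @ xs2) (ts1 @ ts2) = RS_sum f g xs1 ts1 + RS_sum f g xs2 ts2"
    and "mesh_less xs1 \<delta> \<Longrightarrow> mesh_less xs2 \<delta> \<Longrightarrow> mesh_less (butlast xs1 @ xs2) \<delta>"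
proof -
  have ip1: "interval_partition a u xs1" and len1: "length ts1 = length xs1 - 1"
    and tg1: "\<And>i. i < length ts1 \<Longrightarrow> xs1 ! i \<le> ts1 ! i \<and> ts1 ! i \<le> xs1 ! Suc i"
    using t1 unfolding tagged_interval_partition_def by auto
  have ip2: "interval_partition u v xs2" and len2: "length ts2 = length xs2 - 1"
    and tg2: "\<And>i. i < length ts2 \<Longrightarrow> xs2 ! i \<le> ts2 ! i \<and> ts2 ! i \<le> xs2 ! Suc i"
    using t2 unfolding tagged_interval_partition_def by auto
  have ne1: "xs1 \<noteq> []" and h1: "hd xs1 = a" and l1: "last xs1 = u" and s1: "sorted xs1"
    using ip1 unfolding interval_partition_def by auto
  have ne2: "xs2 \<noteq> []" and h2: "hd xs2 = u" and l2: "last xs2 = v" and s2: "sorted xs2"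
    using ip2 unfolding interval_partition_def by auto
  define n1 where "n1 = length ts1"
  define n2 where "n2 = length ts2"
  define xs where "xs = butlast xs1 @ xs2"
  define ts where "ts = ts1 @ ts2"
  have lx1: "length xs1 = Suc n1" using len1 ne1 unfolding n1_def by (cases xs1) auto
  have lx2: "length xs2 = Suc n2" using len2 ne2 unfolding n2_def by (cases xs2) auto
  have lbl: "length (butlast xs1) = n1" using lx1 by simp
  have lxs: "length xs = n1 + Suc n2" unfolding xs_def using lbl lx2 by simp
  have lts: "length ts = n1 + n2" unfolding ts_def n1_def n2_def by simp
  have A: "xs ! i = xs1 ! i" if "i \<le> n1" for i
  proof (cases "i < n1")
    case True then show ?thesis unfolding xs_def using lbl by (simp add: nth_append nth_butlast)
  next
    case False
    then have "i = n1" using that by simp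
    then have "xs ! i = xs2 ! 0" unfolding xs_def using lbl by (simp add: nth_append)
    also have "\<dots> = u" using ne2 h2 by (simp add: hd_conv_nth)
    also have "\<dots> = xs1 ! n1" using ne1 l1 lx1 by (simp add: last_conv_nth)
    finally show ?thesis using \<open>i = n1\<close> by simp
  qed
  have B: "xs ! (n1 + j) = xs2 ! j" for j unfolding xs_def using lbl by (simp add: nth_append)
  have TA: "ts ! i = ts1 ! i" if "i < n1" for i using that unfolding ts_def n1_def by (simp add: nth_append)
  have TB: "ts ! (n1 + j) = ts2 ! j" for j unfolding ts_def n1_def by (rule nth_append_length_plus)
  have split: "P i" if "i < n1 + n2" "\<And>i. i < n1 \<Longrightarrow> P i" "\<And>j. j < n2 \<Longrightarrow> P (n1 + j)" for P i
  proof (cases "i < n1")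
    case True
    then show ?thesis by (rule that(2))
  next
    case False
    then have e: "i = n1 + (i - n1)" by simp
    have "i - n1 < n2" using False that(1) by simp
    then have "P (n1 + (i - n1))" by (rule that(3))
    then show ?thesis using e by simp
  qed
  have ipx: "interval_partition a v xs"
  proof -
    have xne: "xs \<noteq> []" using lxs by auto
    moreover have "hd xs = a" using A[of 0] ne1 h1 xne by (simp add: hd_conv_nth)
    moreover have "last xs = v" unfolding xs_def using ne2 l2 by simp
    moreover have "sorted xs" unfolding xs_def sorted_append
    proof (intro conjI ballI)
      show "sorted (butlast xs1)" using s1 by (rule sorted_butlast)
      show "sorted xs2" by (rule s2)
      fix x y assume "x \<in> set (butlast xs1)" "y \<in> set xs2"
      have "x \<le> u" using ip_set_bounds[OF ip1 in_set_butlastD[OF \<open>x \<in> set (butlast xs1)\<close>]] by simp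
      moreover have "u \<le> y" using ip_set_bounds[OF ip2 \<open>y \<in> set xs2\<close>] by simp
      ultimately show "x \<le> y" by simp
    qed
    ultimately show ?thesis unfolding interval_partition_def by simp
  qed
  have "xs ! i \<le> ts ! i \<and> ts ! i \<le> xs ! Suc i" if "i < length ts" for i
  proof (rule split[of i])
    show "i < n1 + n2" using that lts by simp
  next
    fix i assume "i < n1"
    then show "xs ! i \<le> ts ! i \<and> ts ! i \<le> xs ! Suc i" using A[of i] A[of "Suc i"] TA[of i] tg1[of i] n1_def by simp
  next
    fix j assume "j < n2"
    then show "xs ! (n1 + j) \<le> ts ! (n1 + j) \<and> ts ! (n1 + j) \<le> xs ! Suc (n1 + j)"
      using B[of j] B[of "Suc j"] TB[of j] tg2[of j] n2_def by simp
  qed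
  then show "tagged_interval_partition a v (butlast xs1 @ xs2) (ts1 @ ts2)"
    unfolding tagged_interval_partition_def xs_def[symmetric] ts_def[symmetric] using ipx lts lxs by simp
  have "RS_sum f g xs ts = (\<Sum>i<n1 + n2. f (ts ! i) * (g (xs ! Suc i) - g (xs ! i)))"
    unfolding RS_sum_def lxs by simp
  also have "\<dots> = (\<Sum>i<n1. f (ts ! i) * (g (xs ! Suc i) - g (xs ! i)))
      + (\<Sum>j<n2. f (ts ! (n1 + j)) * (g (xs ! Suc (n1 + j)) - g (xs ! (n1 + j))))"
    using sum_lessThan_add_split[of "\<lambda>i. f (ts ! i) * (g (xs ! Suc i) - g (xs ! i))" n1 n2] by simp
  also have "(\<Sum>i<n1. f (ts ! i) * (g (xs ! Suc i) - g (xs ! i))) = RS_sum f g xs1 ts1"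
    unfolding RS_sum_def lx1 using A TA by (intro sum.cong) auto
  also have "(\<Sum>j<n2. f (ts ! (n1 + j)) * (g (xs ! Suc (n1 + j)) - g (xs ! (n1 + j)))) = RS_sum f g xs2 ts2"
    unfolding RS_sum_def lx2 using B TB by (intro sum.cong) (auto simp del: add_Suc_right simp: add_Suc_right[symmetric])
  finally show "RS_sum f g (butlast xs1 @ xs2) (ts1 @ ts2) = RS_sum f g xs1 ts1 + RS_sum f g xs2 ts2"
    unfolding xs_def ts_def .
  assume m1: "mesh_less xs1 \<delta>" and m2: "mesh_less xs2 \<delta>"
  have "xs ! Suc i - xs ! i < \<delta>" if "i < length xs - 1" for i
  proof (rule split[of i])
    show "i < n1 + n2" using that lxs by simp
  next
    fix i assume "i < n1"
    then show "xs ! Suc i - xs ! i < \<delta>" using A[of i] A[of "Suc i"] m1 lx1 unfolding mesh_less_def by simp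
  next
    fix j assume "j < n2"
    then show "xs ! Suc (n1 + j) - xs ! (n1 + j) < \<delta>"
      using B[of j] B[of "Suc j"] m2 lx2 unfolding mesh_less_def by simp
  qed
  then show "mesh_less (butlast xs1 @ xs2) \<delta>" unfolding mesh_less_def xs_def by simp
qed

lemma RS_additive:
  assumes au: "a \<le> u" and uv: "u \<le> v"
    and I1: "has_RS_integral f g a u I1" and I2: "has_RS_integral f g u v I2"
    and I: "has_RS_integral f g a v I"
  shows "I = I1 + I2"
proof (rule ccontr)
  assume ne: "I \<noteq> I1 + I2"
  define e where "e = \<bar>I - (I1 + I2)\<bar> / 3"
  have e: "e > 0" using ne by (simp add: e_def)
  obtain d1 where d1: "d1 > 0" "\<And>xs ts. tagged_interval_partition a u xs ts \<and> mesh_less xs d1 \<Longrightarrow>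
         \<bar>RS_sum f g xs ts - I1\<bar> < e"
    using I1 e unfolding has_RS_integral_def by meson
  obtain d2 where d2: "d2 > 0" "\<And>xs ts. tagged_interval_partition u v xs ts \<and> mesh_less xs d2 \<Longrightarrow>
         \<bar>RS_sum f g xs ts - I2\<bar> < e"
    using I2 e unfolding has_RS_integral_def by meson
  obtain d3 where d3: "d3 > 0" "\<And>xs ts. tagged_interval_partition a v xs ts \<and> mesh_less xs d3 \<Longrightarrow>
         \<bar>RS_sum f g xs ts - I\<bar> < e"
    using I e unfolding has_RS_integral_def by meson
  define d where "d = min d1 (min d2 d3)"
  have d: "d > 0" using d1 d2 d3 by (simp add: d_def)
  obtain n1 :: nat where n1: "n1 > 0" "(u - a) / n1 < d" using exists_fine_n[OF d] by blast
  obtain n2 :: nat where n2: "n2 > 0" "(v - u) / n2 < d" using exists_fine_n[OF d] by blast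
  define xs1 where "xs1 = upart a u n1"
  define ts1 where "ts1 = utags a u n1"
  define xs2 where "xs2 = upart u v n2"
  define ts2 where "ts2 = utags u v n2"
  have t1: "tagged_interval_partition a u xs1 ts1" unfolding xs1_def ts1_def by (rule upart_tagged[OF au n1(1)])
  have t2: "tagged_interval_partition u v xs2 ts2" unfolding xs2_def ts2_def by (rule upart_tagged[OF uv n2(1)])
  have m1: "mesh_less xs1 d" unfolding xs1_def by (rule upart_mesh[OF au n1])
  have m2: "mesh_less xs2 d" unfolding xs2_def by (rule upart_mesh[OF uv n2])
  have md: "mesh_less xs d \<Longrightarrow> d \<le> d' \<Longrightarrow> mesh_less xs d'" for xs d'
    unfolding mesh_less_def by force
  have S1: "\<bar>RS_sum f g xs1 ts1 - I1\<bar> < e" using d1(2) t1 md[OF m1] d_def by simp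
  have S2: "\<bar>RS_sum f g xs2 ts2 - I2\<bar> < e" using d2(2) t2 md[OF m2] d_def by simp
  have t: "tagged_interval_partition a v (butlast xs1 @ xs2) (ts1 @ ts2)" by (rule tagged_concat(1)[OF t1 t2])
  have m: "mesh_less (butlast xs1 @ xs2) d" by (rule tagged_concat(3)[OF t1 t2 m1 m2])
  have S: "\<bar>RS_sum f g (butlast xs1 @ xs2) (ts1 @ ts2) - I\<bar> < e" using d3(2) t md[OF m] d_def by simp
  have "RS_sum f g (butlast xs1 @ xs2) (ts1 @ ts2) = RS_sum f g xs1 ts1 + RS_sum f g xs2 ts2"
    by (rule tagged_concat(2)[OF t1 t2])
  then have "\<bar>I - (I1 + I2)\<bar> < 3 * e" using S S1 S2 by linarith
  then show False unfolding e_def by simp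
qed

lemma RS_indef_cont:
  fixes f g :: "real \<Rightarrow> real"
  assumes ab: "a \<le> b" and cf: "continuous_on {a..b} f" and cg: "continuous_on {a..b} g"
    and VB: "\<And>u v xs. a \<le> u \<Longrightarrow> v \<le> b \<Longrightarrow> interval_partition u v xs \<Longrightarrow> variation_sum g xs \<le> B"
  shows "continuous_on {a..b} (\<lambda>u. RS_integral f g a u)"
proof -
  have ex: "has_RS_integral f g u v (RS_integral f g u v)" if uvb: "a \<le> u" "u \<le> v" "v \<le> b" for u v
  proof -
    have sub: "{u..v} \<subseteq> {a..b}" using uvb by auto
    obtain I where I: "has_RS_integral f g u v I"
      using RS_exists[OF uvb(2) continuous_on_subset[OF cf sub] continuous_on_subset[OF cg sub], of B]
        VB uvb by blast
    then show ?thesis using RS_integral_eq[OF uvb(2) I] by simp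
  qed
  have B0: "0 \<le> B" using vbound_nonneg[OF ab, of g B] VB by blast
  have diff: "RS_integral f g a v - RS_integral f g a u = RS_integral f g u v"
    if "a \<le> u" "u \<le> v" "v \<le> b" for u v
    using RS_additive[OF that(1,2) ex[of a u] ex[of u v] ex[of a v]] that by simp
  obtain M where M: "\<And>x. x \<in> {a..b} \<Longrightarrow> \<bar>f x\<bar> \<le> M"
    using compact_imp_bounded[OF compact_continuous_image[OF cf compact_Icc]]
    unfolding bounded_iff by (auto simp del: atLeastAtMost_iff)
  have M0: "0 \<le> M" using M[of a] ab by force
  have ucf: "uniformly_continuous_on {a..b} f" by (rule compact_uniformly_continuous[OF cf compact_Icc])
  have ucg: "uniformly_continuous_on {a..b} g" by (rule compact_uniformly_continuous[OF cg compact_Icc])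
  show ?thesis
    unfolding continuous_on_iff
  proof (intro ballI allI impI)
    fix x e :: real assume x: "x \<in> {a..b}" and e: "e > 0"
    define \<eta> where "\<eta> = e / (2 * (B + 1))"
    have eta: "\<eta> > 0" using e B0 by (simp add: \<eta>_def)
    have etaB: "\<eta> * B < e / 2"
    proof -
      have "\<eta> * B = (e / 2) * (B / (B + 1))" using B0 by (simp add: \<eta>_def field_simps)
      also have "\<dots> < (e / 2) * 1" using e B0 by (intro mult_strict_left_mono) auto
      finally show ?thesis by simp
    qed
    define \<theta> where "\<theta> = e / (2 * (M + 1))"
    have th: "\<theta> > 0" using e M0 by (simp add: \<theta>_def)
    have thM: "M * \<theta> < e / 2"
    proof -
      have "M * \<theta> = (e / 2) * (M / (M + 1))" using M0 by (simp add: \<theta>_def field_simps)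
      also have "\<dots> < (e / 2) * 1" using e M0 by (intro mult_strict_left_mono) auto
      finally show ?thesis by simp
    qed
    obtain d1 where d1: "d1 > 0" "\<And>x x'. x \<in> {a..b} \<Longrightarrow> x' \<in> {a..b} \<Longrightarrow> dist x' x < d1 \<Longrightarrow> dist (f x') (f x) < \<eta>"
      using ucf eta unfolding uniformly_continuous_on_def by metis
    obtain d2 where d2: "d2 > 0" "\<And>x x'. x \<in> {a..b} \<Longrightarrow> x' \<in> {a..b} \<Longrightarrow> dist x' x < d2 \<Longrightarrow> dist (g x') (g x) < \<theta>"
      using ucg th unfolding uniformly_continuous_on_def by metis
    define d where "d = min d1 d2"
    have near: "\<bar>RS_integral f g a v - RS_integral f g a u\<bar> < e"
      if uv: "a \<le> u" "u \<le> v" "v \<le> b" "v - u < d" for u v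
    proof -
      have fb: "\<forall>y\<in>{u..v}. \<bar>f y - f u\<bar> \<le> \<eta>"
      proof
        fix y assume "y \<in> {u..v}"
        then have "dist (f y) (f u) < \<eta>" using d1(2)[of u y] uv unfolding d_def by (simp add: dist_real_def)
        then show "\<bar>f y - f u\<bar> \<le> \<eta>" by (simp add: dist_real_def)
      qed
      have vb: "\<forall>xs. interval_partition u v xs \<longrightarrow> variation_sum g xs \<le> B" using VB uv by blast
      have 1: "\<bar>RS_integral f g u v - f u * (g v - g u)\<bar> \<le> \<eta> * B"
        using RS_integral_const_bound[OF uv(2) ex[OF uv(1,2,3)] less_imp_le[OF eta] fb vb] .
      have "dist (g v) (g u) < \<theta>" using d2(2)[of u v] uv unfolding d_def by (simp add: dist_real_def)
      then have gd: "\<bar>g v - g u\<bar> \<le> \<theta>" by (simp add: dist_real_def)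
      have "\<bar>f u * (g v - g u)\<bar> \<le> M * \<theta>"
        unfolding abs_mult using M[of u] uv gd M0 by (intro mult_mono) auto
      then have "\<bar>RS_integral f g u v\<bar> < e" using 1 etaB thM by linarith
      then show ?thesis using diff[OF uv(1,2,3)] by simp
    qed
    show "\<exists>d>0. \<forall>x'\<in>{a..b}. dist x' x < d \<longrightarrow> dist (RS_integral f g a x') (RS_integral f g a x) < e"
    proof (intro exI[of _ d] conjI ballI impI)
      show "d > 0" using d1 d2 by (simp add: d_def)
      fix x' assume x': "x' \<in> {a..b}" and dx: "dist x' x < d"
      show "dist (RS_integral f g a x') (RS_integral f g a x) < e"
      proof (cases "x \<le> x'")
        case True
        then show ?thesis using near[of x x'] x x' dx by (simp add: dist_real_def)
      next
        case False
        then show ?thesis using near[of x' x] x x' dx by (simp add: dist_real_def abs_minus_commute)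
      qed
    qed
  qed
qed




lemma variation_sum_cons:
  assumes "xs \<noteq> []"
  shows "variation_sum \<gamma> (x # xs) = norm (\<gamma> (hd xs) - \<gamma> x) + variation_sum \<gamma> xs"
proof -
  obtain y ys where xs: "xs = y # ys" using assms by (cases xs) auto
  have "variation_sum \<gamma> (x # xs) = (\<Sum>i<Suc (length ys). norm (\<gamma> ((x # y # ys) ! Suc i) - \<gamma> ((x # y # ys) ! i)))"
    unfolding variation_sum_def xs by simp
  also have "\<dots> = norm (\<gamma> y - \<gamma> x) + (\<Sum>i<length ys. norm (\<gamma> ((y # ys) ! Suc i) - \<gamma> ((y # ys) ! i)))"
    by (subst sum.lessThan_Suc_shift) simp
  finally show ?thesis unfolding variation_sum_def xs by simp
qed

lemma variation_sum_snoc: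
  assumes "xs \<noteq> []"
  shows "variation_sum \<gamma> (xs @ [y]) = variation_sum \<gamma> xs + norm (\<gamma> y - \<gamma> (last xs))"
proof -
  define n where "n = length xs - 1"
  have ln: "length xs = Suc n" using assms unfolding n_def by (cases xs) auto
  have "variation_sum \<gamma> (xs @ [y]) = (\<Sum>i<Suc n. norm (\<gamma> ((xs @ [y]) ! Suc i) - \<gamma> ((xs @ [y]) ! i)))"
    unfolding variation_sum_def using ln by simp
  also have "\<dots> = (\<Sum>i<n. norm (\<gamma> ((xs @ [y]) ! Suc i) - \<gamma> ((xs @ [y]) ! i)))
      + norm (\<gamma> ((xs @ [y]) ! Suc n) - \<gamma> ((xs @ [y]) ! n))" by simp
  also have "(\<Sum>i<n. norm (\<gamma> ((xs @ [y]) ! Suc i) - \<gamma> ((xs @ [y]) ! i))) = variation_sum \<gamma> xs"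
    unfolding variation_sum_def using ln by (intro sum.cong) (auto simp: nth_append)
  also have "(xs @ [y]) ! Suc n = y" using ln by (simp add: nth_append)
  also have "(xs @ [y]) ! n = last xs" using ln assms by (simp add: nth_append last_conv_nth)
  finally show ?thesis .
qed

lemma variation_sum_nonneg: "0 \<le> variation_sum \<gamma> xs"
  unfolding variation_sum_def by (simp add: sum_nonneg)

lemma vs_sub_bound:
  assumes bv: "bounded_variation_on \<gamma> a b" and au: "a \<le> u" and vb: "v \<le> b"
    and ip: "interval_partition u v xs"
  shows "variation_sum \<gamma> xs \<le> path_len \<gamma> a b"
proof -
  have ne: "xs \<noteq> []" and h: "hd xs = u" and l: "last xs = v" and s: "sorted xs"
    using ip unfolding interval_partition_def by auto
  define ys where "ys = a # xs @ [b]"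
  have "interval_partition a b ys"
    unfolding interval_partition_def ys_def
  proof (intro conjI)
    have "\<forall>x\<in>set xs. a \<le> x \<and> x \<le> b" using ip_set_bounds[OF ip] au vb by fastforce
    moreover have "a \<le> b" using ip_le[OF ip] au vb by simp
    ultimately show "sorted (a # xs @ [b])" using s by (auto simp: sorted_append)
  qed simp_all
  then have "variation_sum \<gamma> ys \<le> path_len \<gamma> a b"
    using bv unfolding path_len_def bounded_variation_on_def by (auto intro!: cSup_upper)
  moreover have "variation_sum \<gamma> ys = norm (\<gamma> (hd (xs @ [b])) - \<gamma> a) + variation_sum \<gamma> xs + norm (\<gamma> b - \<gamma> (last xs))"
    unfolding ys_def by (simp add: variation_sum_cons variation_sum_snoc ne)
  moreover have "0 \<le> norm (\<gamma> (hd (xs @ [b])) - \<gamma> a)" "0 \<le> norm (\<gamma> b - \<gamma> (last xs))" by simp_all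
  ultimately show ?thesis by linarith
qed

lemma vs_inner_bound:
  "variation_sum (\<lambda>u. \<gamma> u \<bullet> e) xs \<le> norm e * variation_sum \<gamma> xs"
  unfolding variation_sum_def sum_distrib_left
proof (rule sum_mono)
  fix i
  have "norm (\<gamma> (xs ! Suc i) \<bullet> e - \<gamma> (xs ! i) \<bullet> e) = \<bar>(\<gamma> (xs ! Suc i) - \<gamma> (xs ! i)) \<bullet> e\<bar>"
    by (simp add: inner_diff_left)
  also have "\<dots> \<le> norm (\<gamma> (xs ! Suc i) - \<gamma> (xs ! i)) * norm e" by (rule Cauchy_Schwarz_ineq2)
  finally show "norm (\<gamma> (xs ! Suc i) \<bullet> e - \<gamma> (xs ! i) \<bullet> e) \<le> norm e * norm (\<gamma> (xs ! Suc i) - \<gamma> (xs ! i))"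
    by (simp add: mult.commute)
qed

lemma path_len_bdd:
  assumes bv: "bounded_variation_on \<gamma> a b" and "y \<le> b"
  shows "bdd_above {variation_sum \<gamma> xs | xs. interval_partition a y xs}"
  using vs_sub_bound[OF bv order_refl assms(2)] unfolding bdd_above_def by blast

lemma path_len_nonneg:
  assumes bv: "bounded_variation_on \<gamma> a b" "a \<le> x" "x \<le> b"
  shows "0 \<le> path_len \<gamma> a x"
proof -
  have "interval_partition a x [a, x]" using assms unfolding interval_partition_def by simp
  then have "variation_sum \<gamma> [a, x] \<le> path_len \<gamma> a x"
    unfolding path_len_def using path_len_bdd[OF bv(1) assms(3)] by (auto intro!: cSup_upper)
  then show ?thesis using variation_sum_nonneg[of \<gamma> "[a, x]"] by linarith
qed

lemma path_len_step:
  assumes bv: "bounded_variation_on \<gamma> a b" and ax: "a \<le> x" and xy: "x \<le> y" and yb: "y \<le> b"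
  shows "path_len \<gamma> a x + norm (\<gamma> y - \<gamma> x) \<le> path_len \<gamma> a y"
proof -
  have ne: "{variation_sum \<gamma> xs | xs. interval_partition a x xs} \<noteq> {}"
    using ax unfolding interval_partition_def by (auto intro!: exI[of _ "[a, x]"])
  have "path_len \<gamma> a x \<le> path_len \<gamma> a y - norm (\<gamma> y - \<gamma> x)"
    unfolding path_len_def[of \<gamma> a x]
  proof (rule cSup_least[OF ne])
    fix s assume "s \<in> {variation_sum \<gamma> xs | xs. interval_partition a x xs}"
    then obtain xs where s: "s = variation_sum \<gamma> xs" and ip: "interval_partition a x xs" by blast
    have ne': "xs \<noteq> []" and l: "last xs = x" using ip unfolding interval_partition_def by auto
    have "interval_partition a y (xs @ [y])"
      using ip xy ip_set_bounds[OF ip] unfolding interval_partition_def by (force simp: sorted_append)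
    then have "variation_sum \<gamma> (xs @ [y]) \<le> path_len \<gamma> a y"
      unfolding path_len_def using path_len_bdd[OF bv yb] by (auto intro!: cSup_upper)
    then show "s \<le> path_len \<gamma> a y - norm (\<gamma> y - \<gamma> x)"
      using variation_sum_snoc[OF ne', of \<gamma> y] l s by simp
  qed
  then show ?thesis by simp
qed




lemma pow_step_ineq:
  fixes y z :: real
  assumes "0 \<le> y" "y \<le> z"
  shows "y ^ k * (z - y) / fact k \<le> (z ^ Suc k - y ^ Suc k) / fact (Suc k)"
proof -
  have "z ^ Suc k - y ^ Suc k = (z - y) * (\<Sum>i<Suc k. y ^ (Suc k - Suc i) * z ^ i)"
    by (rule power_diff_sumr2)
  also have "(\<Sum>i<Suc k. y ^ (Suc k - Suc i) * z ^ i) \<ge> (\<Sum>i<Suc k. y ^ k)"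
  proof (rule sum_mono)
    fix i assume "i \<in> {..<Suc k}"
    then have "y ^ k = y ^ (Suc k - Suc i) * y ^ i" by (simp add: power_add[symmetric])
    also have "\<dots> \<le> y ^ (Suc k - Suc i) * z ^ i"
      using assms by (intro mult_left_mono power_mono) auto
    finally show "y ^ k \<le> y ^ (Suc k - Suc i) * z ^ i" .
  qed
  then have "(z - y) * (\<Sum>i<Suc k. y ^ (Suc k - Suc i) * z ^ i) \<ge> (z - y) * (real (Suc k) * y ^ k)"
    using assms by (intro mult_left_mono) auto
  finally have *: "real (Suc k) * (y ^ k * (z - y)) \<le> z ^ Suc k - y ^ Suc k" by (simp add: algebra_simps)
  have fs: "(fact (Suc k) :: real) = real (Suc k) * fact k" by (simp only: fact_Suc of_nat_Suc)
  have "y ^ k * (z - y) / fact k = real (Suc k) * (y ^ k * (z - y)) / (real (Suc k) * fact k)"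
    by (rule mult_divide_mult_cancel_left[symmetric]) simp
  also have "\<dots> = real (Suc k) * (y ^ k * (z - y)) / fact (Suc k)" by (simp only: fs)
  also have "\<dots> \<le> (z ^ Suc k - y ^ Suc k) / fact (Suc k)"
    using * by (intro divide_right_mono) auto
  finally show ?thesis .
qed

lemma L2_set_sum_le:
  assumes "finite I"
  shows "L2_set (\<lambda>p. \<Sum>i\<in>I. F i p) W \<le> (\<Sum>i\<in>I. L2_set (F i) W)"
  using assms
proof (induction I rule: finite_induct)
  case empty then show ?case by (simp add: L2_set_0')
next
  case (insert j I)
  have "L2_set (\<lambda>p. \<Sum>i\<in>insert j I. F i p) W = L2_set (\<lambda>p. F j p + (\<Sum>i\<in>I. F i p)) W"
    using insert by simp
  also have "\<dots> \<le> L2_set (F j) W + L2_set (\<lambda>p. \<Sum>i\<in>I. F i p) W" by (rule L2_set_triangle_ineq)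
  also have "\<dots> \<le> L2_set (F j) W + (\<Sum>i\<in>I. L2_set (F i) W)" using insert by simp
  finally show ?case using insert by simp
qed

lemma L2_tensor:
  fixes v :: "'v::euclidean_space"
  assumes "finite A"
  shows "L2_set (\<lambda>p. f (fst p) * (v \<bullet> snd p)) (A \<times> Basis) = L2_set f A * norm v"
proof -
  have nv: "(norm v)\<^sup>2 = (\<Sum>e\<in>Basis. (v \<bullet> e)\<^sup>2)"
    unfolding power2_norm_eq_inner by (subst euclidean_inner) (simp add: power2_eq_square)
  have "(\<Sum>p\<in>A \<times> Basis. (f (fst p) * (v \<bullet> snd p))\<^sup>2) = (\<Sum>w\<in>A. \<Sum>e\<in>Basis. (f w)\<^sup>2 * (v \<bullet> e)\<^sup>2)"
    by (subst sum.cartesian_product) (simp add: power_mult_distrib case_prod_beta)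
  also have "\<dots> = (\<Sum>w\<in>A. (f w)\<^sup>2) * (norm v)\<^sup>2"
    unfolding nv sum_distrib_right by (simp add: sum_distrib_left)
  finally show ?thesis
    unfolding L2_set_def by (simp add: real_sqrt_mult)
qed

lemma words_finite: "finite (words k :: 'v::euclidean_space list set)"
proof -
  have "words k = {xs :: 'v list. set xs \<subseteq> Basis \<and> length xs = k}" unfolding words_def by auto
  then show ?thesis using finite_lists_length_eq[OF finite_Basis] by simp
qed

lemma words_0: "words 0 = {[]}" unfolding words_def by auto

lemma words_Suc: "words (Suc k) = (\<lambda>p. fst p @ [snd p]) ` (words k \<times> Basis)"
proof
  show "(\<lambda>p. fst p @ [snd p]) ` (words k \<times> Basis) \<subseteq> words (Suc k)" unfolding words_def by auto
  show "words (Suc k) \<subseteq> (\<lambda>p. fst p @ [snd p]) ` (words k \<times> Basis)"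
  proof
    fix w assume w: "w \<in> words (Suc k)"
    then have ne: "w \<noteq> []" unfolding words_def by auto
    have sw: "set w \<subseteq> Basis" "length w = Suc k" using w unfolding words_def by auto
    have "set (butlast w) \<subseteq> Basis" using sw(1) by (meson in_set_butlastD subsetD subsetI)
    then have "butlast w \<in> words k" using sw(2) unfolding words_def by simp
    moreover have "last w \<in> Basis" using sw(1) last_in_set[OF ne] by blast
    ultimately have "(butlast w, last w) \<in> words k \<times> Basis" by simp
    moreover have "w = fst (butlast w, last w) @ [snd (butlast w, last w)]" using ne by simp
    ultimately show "w \<in> (\<lambda>p. fst p @ [snd p]) ` (words k \<times> Basis)" by (rule rev_image_eqI)
  qed
qed

lemma words_inj: "inj_on (\<lambda>p. fst p @ [snd p]) (words k \<times> Basis)"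
  by (auto simp: inj_on_def)

definition signorm :: "(real \<Rightarrow> 'v::euclidean_space) \<Rightarrow> real \<Rightarrow> real \<Rightarrow> nat \<Rightarrow> real" where
  "signorm \<gamma> a u k = L2_set (\<lambda>w. signature_coord \<gamma> a u w) (words k)"

lemma sig_inner_bound:
  "\<bar>sig_inner k \<gamma> \<sigma> a s t\<bar> \<le> signorm \<gamma> a s k * signorm \<sigma> a t k"
proof -
  have "\<bar>sig_inner k \<gamma> \<sigma> a s t\<bar> \<le> (\<Sum>w\<in>words k. \<bar>signature_coord \<gamma> a s w\<bar> * \<bar>signature_coord \<sigma> a t w\<bar>)"
    unfolding sig_inner_def by (rule order_trans[OF sum_abs]) (simp add: abs_mult)
  also have "\<dots> \<le> signorm \<gamma> a s k * signorm \<sigma> a t k"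
    unfolding signorm_def by (rule L2_set_mult_ineq)
  finally show ?thesis .
qed




context
  fixes \<gamma> :: "real \<Rightarrow> 'v::euclidean_space" and a b :: real
  assumes ab: "a \<le> b" and cont: "continuous_on {a..b} \<gamma>" and bv: "bounded_variation_on \<gamma> a b"
begin

lemma inner_cont: "continuous_on {a..b} (\<lambda>u. \<gamma> u \<bullet> e)"
  by (intro continuous_on_inner cont continuous_on_const)

lemma inner_vb:
  assumes "a \<le> u" "v \<le> b" "interval_partition u v xs"
  shows "variation_sum (\<lambda>u. \<gamma> u \<bullet> e) xs \<le> norm e * path_len \<gamma> a b"
proof -
  have "variation_sum (\<lambda>u. \<gamma> u \<bullet> e) xs \<le> norm e * variation_sum \<gamma> xs" by (rule vs_inner_bound)
  also have "\<dots> \<le> norm e * path_len \<gamma> a b"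
    by (intro mult_left_mono vs_sub_bound[OF bv assms]) simp
  finally show ?thesis .
qed

lemma iter_cont: "continuous_on {a..b} (\<lambda>u. iter_int \<gamma> a u ws)"
proof (induction ws)
  case Nil then show ?case by simp
next
  case (Cons e ws)
  have "continuous_on {a..b} (\<lambda>u. RS_integral (\<lambda>v. iter_int \<gamma> a v ws) (\<lambda>v. \<gamma> v \<bullet> e) a u)"
    by (rule RS_indef_cont[OF ab Cons.IH inner_cont inner_vb])
  then show ?case by simp
qed

lemma iter_has:
  assumes "a \<le> u" "u \<le> b"
  shows "has_RS_integral (\<lambda>v. iter_int \<gamma> a v ws) (\<lambda>v. \<gamma> v \<bullet> e) a u (iter_int \<gamma> a u (e # ws))"
proof -
  have sub: "{a..u} \<subseteq> {a..b}" using assms by auto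
  obtain I where I: "has_RS_integral (\<lambda>v. iter_int \<gamma> a v ws) (\<lambda>v. \<gamma> v \<bullet> e) a u I"
    using RS_exists[OF assms(1) continuous_on_subset[OF iter_cont sub] continuous_on_subset[OF inner_cont sub],
        where B="norm e * path_len \<gamma> a b"] inner_vb[of a u] assms by blast
  then show ?thesis using RS_integral_eq[OF assms(1) I] by simp
qed

lemma signorm_step:
  assumes IH: "\<And>x. x \<in> {a..b} \<Longrightarrow> signorm \<gamma> a x k \<le> path_len \<gamma> a x ^ k / fact k"
    and u: "a \<le> u" "u \<le> b"
  shows "signorm \<gamma> a u (Suc k) \<le> path_len \<gamma> a u ^ Suc k / fact (Suc k)"
proof -
  define L where "L x = path_len \<gamma> a x" for x
  define W where "W = (words k :: 'v list set) \<times> (Basis :: 'v set)"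
  have finW: "finite W" unfolding W_def using words_finite finite_Basis by blast
  define J where "J p = RS_integral (\<lambda>v. signature_coord \<gamma> a v (fst p)) (\<lambda>v. \<gamma> v \<bullet> snd p) a u"
    for p :: "'v list \<times> 'v"
  have scJ: "signature_coord \<gamma> a u (fst p @ [snd p]) = J p" for p
    unfolding J_def signature_coord_def by simp
  have hasJ: "has_RS_integral (\<lambda>v. signature_coord \<gamma> a v (fst p)) (\<lambda>v. \<gamma> v \<bullet> snd p) a u (J p)" for p
  proof -
    have "iter_int \<gamma> a u (snd p # rev (fst p)) = J p" using scJ[of p] unfolding signature_coord_def by simp
    then show ?thesis using iter_has[OF u, of "rev (fst p)" "snd p"] unfolding signature_coord_def by simp
  qed
  have normJ: "signorm \<gamma> a u (Suc k) = L2_set J W"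
    unfolding signorm_def L2_set_def words_Suc W_def
    by (subst sum.reindex[OF words_inj]) (simp add: scJ o_def)
  show ?thesis
  proof (rule field_le_epsilon)
    fix e :: real assume e: "e > 0"
    define \<epsilon> where "\<epsilon> = e / (real (card W) + 1)"
    have eps: "\<epsilon> > 0" using e by (simp add: \<epsilon>_def)
    have cWe: "real (card W) * \<epsilon> \<le> e" unfolding \<epsilon>_def using e by (simp add: field_simps)
    have "\<forall>p\<in>W. \<exists>d>0. \<forall>xs ts. tagged_interval_partition a u xs ts \<and> mesh_less xs d \<longrightarrow>
        \<bar>RS_sum (\<lambda>v. signature_coord \<gamma> a v (fst p)) (\<lambda>v. \<gamma> v \<bullet> snd p) xs ts - J p\<bar> < \<epsilon>"
      using hasJ eps unfolding has_RS_integral_def by blast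
    from bchoice[OF this] obtain D where D: "\<forall>p\<in>W. D p > 0 \<and> (\<forall>xs ts. tagged_interval_partition a u xs ts \<and> mesh_less xs (D p) \<longrightarrow>
        \<bar>RS_sum (\<lambda>v. signature_coord \<gamma> a v (fst p)) (\<lambda>v. \<gamma> v \<bullet> snd p) xs ts - J p\<bar> < \<epsilon>)"
      by blast
    define \<delta> where "\<delta> = Min (insert 1 (D ` W))"
    have dpos: "\<delta> > 0" unfolding \<delta>_def using D finW by (subst Min_gr_iff) auto
    have dle: "\<delta> \<le> D p" if "p \<in> W" for p unfolding \<delta>_def using finW that by (intro Min_le) auto
    obtain n :: nat where n: "n > 0" "(u - a) / n < \<delta>" using exists_fine_n[OF dpos] by blast
    define xs where "xs = upart a u n"
    define ts where "ts = utags a u n"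
    have t: "tagged_interval_partition a u xs ts" unfolding xs_def ts_def by (rule upart_tagged[OF u(1) n(1)])
    have ip: "interval_partition a u xs" using t unfolding tagged_interval_partition_def by simp
    have m: "mesh_less xs \<delta>" unfolding xs_def by (rule upart_mesh[OF u(1) n])
    have mp: "mesh_less xs (D p)" if "p \<in> W" for p using m dle[OF that] unfolding mesh_less_def by force
    define S where "S p = RS_sum (\<lambda>v. signature_coord \<gamma> a v (fst p)) (\<lambda>v. \<gamma> v \<bullet> snd p) xs ts" for p
    have err: "\<bar>S p - J p\<bar> < \<epsilon>" if "p \<in> W" for p using D that t mp[OF that] unfolding S_def by blast
    define X where "X i = xs ! i" for i
    have lenxs: "length xs = Suc n" unfolding xs_def upart_def by simp
    have tsX: "ts ! i = X i" if "i < n" for i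
      using that unfolding ts_def X_def xs_def upart_def utags_def by (simp del: upt_Suc)
    have Xb: "a \<le> X i \<and> X i \<le> u" if "i \<le> n" for i
      using ip_nth_bounds[OF ip, of i] lenxs that unfolding X_def by auto
    have Xmono: "X i \<le> X (Suc i)" if "i < n" for i
      using ip_nth_mono[OF ip, of i "Suc i"] lenxs that unfolding X_def by auto
    have X0: "X 0 = a" using ip lenxs unfolding X_def interval_partition_def by (simp add: hd_conv_nth[symmetric])
    have Xn: "X n = u" using ip lenxs unfolding X_def interval_partition_def
      by (metis diff_Suc_1 last_conv_nth)
    define \<Delta> where "\<Delta> i = \<gamma> (X (Suc i)) - \<gamma> (X i)" for i
    have Sform: "S p = (\<Sum>i<n. signature_coord \<gamma> a (X i) (fst p) * (\<Delta> i \<bullet> snd p))" for p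
      unfolding S_def RS_sum_def lenxs \<Delta>_def
    proof (intro sum.cong refl)
      fix i assume "i \<in> {..<n}"
      then have "ts ! i = xs ! i" using tsX[of i] unfolding X_def by simp
      then show "signature_coord \<gamma> a (ts ! i) (fst p) * (\<gamma> (xs ! Suc i) \<bullet> snd p - \<gamma> (xs ! i) \<bullet> snd p) =
         signature_coord \<gamma> a (X i) (fst p) * ((\<gamma> (X (Suc i)) - \<gamma> (X i)) \<bullet> snd p)"
        unfolding X_def by (simp add: inner_diff_left)
    qed simp
    have A1: "L2_set J W \<le> L2_set S W + L2_set (\<lambda>p. J p - S p) W"
      using L2_set_triangle_ineq[of S "\<lambda>p. J p - S p" W] by simp
    have A2: "L2_set (\<lambda>p. J p - S p) W \<le> real (card W) * \<epsilon>"
    proof -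
      have "L2_set (\<lambda>p. J p - S p) W \<le> (\<Sum>p\<in>W. \<bar>J p - S p\<bar>)" by (rule L2_set_le_sum_abs)
      also have "\<dots> \<le> real (card W) * \<epsilon>"
        using err by (intro sum_bounded_above) (simp add: abs_minus_commute less_imp_le)
      finally show ?thesis .
    qed
    have "L2_set S W \<le> (\<Sum>i<n. L2_set (\<lambda>p. signature_coord \<gamma> a (X i) (fst p) * (\<Delta> i \<bullet> snd p)) W)"
      unfolding Sform by (rule L2_set_sum_le) simp
    also have "\<dots> = (\<Sum>i<n. signorm \<gamma> a (X i) k * norm (\<Delta> i))"
      unfolding W_def signorm_def by (intro sum.cong refl) (rule L2_tensor[OF words_finite])
    also have "\<dots> \<le> (\<Sum>i<n. L (X i) ^ k / fact k * (L (X (Suc i)) - L (X i)))"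
    proof (rule sum_mono)
      fix i assume "i \<in> {..<n}"
      then have i: "i < n" by simp
      have x1: "a \<le> X i" "X i \<le> b" using Xb[of i] i u by auto
      have x2: "X (Suc i) \<le> b" using Xb[of "Suc i"] i u by auto
      have "signorm \<gamma> a (X i) k \<le> L (X i) ^ k / fact k" using IH[of "X i"] x1 unfolding L_def by simp
      moreover have "norm (\<Delta> i) \<le> L (X (Suc i)) - L (X i)"
        using path_len_step[OF bv x1(1) Xmono[OF i] x2] unfolding L_def \<Delta>_def by simp
      moreover have "0 \<le> signorm \<gamma> a (X i) k" unfolding signorm_def by simp
      moreover have "0 \<le> norm (\<Delta> i)" by simp
      ultimately show "signorm \<gamma> a (X i) k * norm (\<Delta> i) \<le> L (X i) ^ k / fact k * (L (X (Suc i)) - L (X i))"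
        by (rule mult_mono')
    qed
    also have "\<dots> \<le> (\<Sum>i<n. (L (X (Suc i)) ^ Suc k - L (X i) ^ Suc k) / fact (Suc k))"
    proof (rule sum_mono)
      fix i assume "i \<in> {..<n}"
      then have i: "i < n" by simp
      have x1: "a \<le> X i" "X i \<le> b" using Xb[of i] i u by auto
      have x2: "X (Suc i) \<le> b" using Xb[of "Suc i"] i u by auto
      have "0 \<le> L (X i)" using path_len_nonneg[OF bv x1] unfolding L_def .
      moreover have "L (X i) \<le> L (X (Suc i))"
        using path_len_step[OF bv x1(1) Xmono[OF i] x2] norm_ge_zero[of "\<gamma> (X (Suc i)) - \<gamma> (X i)"]
        unfolding L_def by linarith
      ultimately have "L (X i) ^ k * (L (X (Suc i)) - L (X i)) / fact k
          \<le> (L (X (Suc i)) ^ Suc k - L (X i) ^ Suc k) / fact (Suc k)" by (rule pow_step_ineq)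
      then show "L (X i) ^ k / fact k * (L (X (Suc i)) - L (X i))
          \<le> (L (X (Suc i)) ^ Suc k - L (X i) ^ Suc k) / fact (Suc k)" by simp
    qed
    also have "\<dots> = (L (X n) ^ Suc k - L (X 0) ^ Suc k) / fact (Suc k)"
      unfolding sum_divide_distrib[symmetric] using sum_lessThan_telescope[of "\<lambda>i. L (X i) ^ Suc k" n] by simp
    also have "\<dots> \<le> L u ^ Suc k / fact (Suc k)"
    proof -
      have "0 \<le> L a" using path_len_nonneg[OF bv order_refl ab] unfolding L_def .
      then have "0 \<le> L a ^ Suc k" by simp
      then show ?thesis using X0 Xn by (intro divide_right_mono) auto
    qed
    finally have A3: "L2_set S W \<le> L u ^ Suc k / fact (Suc k)" .
    show "signorm \<gamma> a u (Suc k) \<le> path_len \<gamma> a u ^ Suc k / fact (Suc k) + e"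
      using normJ A1 A2 A3 cWe unfolding L_def by linarith
  qed
qed

lemma signorm_bound:
  assumes "x \<in> {a..b}"
  shows "signorm \<gamma> a x k \<le> path_len \<gamma> a x ^ k / fact k"
  using assms
proof (induction k arbitrary: x)
  case 0
  then show ?case unfolding signorm_def words_0 L2_set_def signature_coord_def by simp
next
  case (Suc k)
  then show ?case using signorm_step[OF Suc.IH, of x] by auto
qed

end




theorem mainTheorem5:
  fixes \<gamma> \<sigma> :: "real \<Rightarrow> 'v::euclidean_space" and \<phi> :: "nat \<Rightarrow> real" and a b s t :: real
  assumes "a \<le> b"
    and "continuous_on {a..b} \<gamma>" and "continuous_on {a..b} \<sigma>"
    and "bounded_variation_on \<gamma> a b" and "bounded_variation_on \<sigma> a b"
    and "\<And>C. C > 0 \<Longrightarrow> summable (\<lambda>k. C ^ k * \<bar>\<phi> k\<bar> / (fact k)\<^sup>2)"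
    and "s \<in> {a..b}" and "t \<in> {a..b}"
  shows "(\<lambda>N. sig_kernel_trunc N \<phi> \<gamma> \<sigma> a s t) \<longlonglongrightarrow> sig_kernel \<phi> \<gamma> \<sigma> a s t
    \<and> (\<forall>N. \<bar>sig_kernel \<phi> \<gamma> \<sigma> a s t - sig_kernel_trunc N \<phi> \<gamma> \<sigma> a s t\<bar>
           \<le> (\<Sum>k. \<bar>\<phi> (k + N + 1)\<bar> * (path_len \<gamma> a s * path_len \<sigma> a t) ^ (k + N + 1)
                   / (fact (k + N + 1))\<^sup>2))"
proof -
  note ab = assms(1)
  define Ls where "Ls = path_len \<gamma> a s"
  define Lt where "Lt = path_len \<sigma> a t"
  have Ls0: "0 \<le> Ls" unfolding Ls_def using path_len_nonneg[OF assms(4)] assms(7) by auto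
  have Lt0: "0 \<le> Lt" unfolding Lt_def using path_len_nonneg[OF assms(5)] assms(8) by auto
  define f where "f k = \<phi> k * sig_inner k \<gamma> \<sigma> a s t" for k
  define bnd where "bnd k = \<bar>\<phi> k\<bar> * (Ls * Lt) ^ k / (fact k)\<^sup>2" for k
  have fb: "\<bar>f k\<bar> \<le> bnd k" for k
  proof -
    have 1: "signorm \<gamma> a s k \<le> Ls ^ k / fact k"
      using signorm_bound[OF ab assms(2) assms(4) assms(7)] unfolding Ls_def .
    have 2: "signorm \<sigma> a t k \<le> Lt ^ k / fact k"
      using signorm_bound[OF ab assms(3) assms(5) assms(8)] unfolding Lt_def .
    have "\<bar>sig_inner k \<gamma> \<sigma> a s t\<bar> \<le> signorm \<gamma> a s k * signorm \<sigma> a t k" by (rule sig_inner_bound)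
    also have "\<dots> \<le> (Ls ^ k / fact k) * (Lt ^ k / fact k)"
      using 1 2 by (intro mult_mono) (auto simp: signorm_def Ls0)
    also have "\<dots> = (Ls * Lt) ^ k / (fact k)\<^sup>2" by (simp add: power_mult_distrib power2_eq_square)
    finally have "\<bar>sig_inner k \<gamma> \<sigma> a s t\<bar> \<le> (Ls * Lt) ^ k / (fact k)\<^sup>2" .
    then have "\<bar>\<phi> k\<bar> * \<bar>sig_inner k \<gamma> \<sigma> a s t\<bar> \<le> \<bar>\<phi> k\<bar> * ((Ls * Lt) ^ k / (fact k)\<^sup>2)"
      by (intro mult_left_mono) auto
    then show ?thesis unfolding f_def bnd_def by (simp add: abs_mult)
  qed
  have sb: "summable bnd"
  proof -
    define C where "C = Ls * Lt + 1"
    have C: "C > 0" unfolding C_def using Ls0 Lt0 by (simp add: add_nonneg_pos)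
    have "summable (\<lambda>k. C ^ k * \<bar>\<phi> k\<bar> / (fact k)\<^sup>2)" by (rule assms(6)[OF C])
    moreover have "norm (bnd k) \<le> C ^ k * \<bar>\<phi> k\<bar> / (fact k)\<^sup>2" for k
    proof -
      have "(Ls * Lt) ^ k \<le> C ^ k" unfolding C_def using Ls0 Lt0 by (intro power_mono) auto
      then have "\<bar>\<phi> k\<bar> * (Ls * Lt) ^ k \<le> C ^ k * \<bar>\<phi> k\<bar>"
        by (simp add: mult.commute mult_left_mono)
      then show ?thesis unfolding bnd_def using Ls0 Lt0 by (simp add: divide_right_mono)
    qed
    ultimately show ?thesis by (rule summable_comparison_test'[where N = 0])
  qed
  have sf: "summable f" by (rule summable_comparison_test'[OF sb, where N = 0]) (simp add: fb)
  have ker: "sig_kernel \<phi> \<gamma> \<sigma> a s t = suminf f" unfolding sig_kernel_def f_def ..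
  have tr: "sig_kernel_trunc N \<phi> \<gamma> \<sigma> a s t = (\<Sum>k\<le>N. f k)" for N unfolding sig_kernel_trunc_def f_def ..
  have part1: "(\<lambda>N. sig_kernel_trunc N \<phi> \<gamma> \<sigma> a s t) \<longlonglongrightarrow> sig_kernel \<phi> \<gamma> \<sigma> a s t"
    unfolding ker tr by (rule summable_LIMSEQ'[OF sf])
  have part2: "\<bar>sig_kernel \<phi> \<gamma> \<sigma> a s t - sig_kernel_trunc N \<phi> \<gamma> \<sigma> a s t\<bar>
           \<le> (\<Sum>k. \<bar>\<phi> (k + N + 1)\<bar> * (path_len \<gamma> a s * path_len \<sigma> a t) ^ (k + N + 1)
                   / (fact (k + N + 1))\<^sup>2)" for N
  proof -
    have "suminf f = (\<Sum>k. f (k + Suc N)) + (\<Sum>i<Suc N. f i)" by (rule suminf_split_initial_segment[OF sf])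
    then have eq: "sig_kernel \<phi> \<gamma> \<sigma> a s t - sig_kernel_trunc N \<phi> \<gamma> \<sigma> a s t = (\<Sum>k. f (k + Suc N))"
      unfolding ker tr by (simp add: lessThan_Suc_atMost)
    have sbs: "summable (\<lambda>k. bnd (k + Suc N))" by (rule summable_ignore_initial_segment[OF sb])
    have sfa: "summable (\<lambda>k. \<bar>f (k + Suc N)\<bar>)"
      by (rule summable_comparison_test'[OF sbs, where N = 0]) (simp add: fb)
    have "\<bar>\<Sum>k. f (k + Suc N)\<bar> \<le> (\<Sum>k. \<bar>f (k + Suc N)\<bar>)" by (rule summable_rabs[OF sfa])
    also have "\<dots> \<le> (\<Sum>k. bnd (k + Suc N))" by (rule suminf_le[OF _ sfa sbs]) (simp add: fb)
    also have "\<dots> = (\<Sum>k. \<bar>\<phi> (k + N + 1)\<bar> * (path_len \<gamma> a s * path_len \<sigma> a t) ^ (k + N + 1)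
                   / (fact (k + N + 1))\<^sup>2)"
      unfolding bnd_def Ls_def Lt_def by simp
    finally show ?thesis unfolding eq .
  qed
  show ?thesis using part1 part2 by blast
qed


end
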